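(* Let $p$ be a prime, $m,t\ge 1$, $B=\mathrm{GF}(p^m)$ and $F=\mathrm{GF}(p^{mt})$, and assume that $t$ is divisible by $p$ (the characteristic of $F$). Let $n=|F|=|B|^t$, $k=n(1-1/|B|)$, and let $\mathcal{C}=\mathrm{RS}(F,k)=\{(f(\alpha))_{\alpha\in F} : f\in F[x],\ \deg f\le k-1\}$, where the symbol $f(\alpha)$ is stored at the node indexed by $\alpha$. Let $K=\ker(\mathrm{Tr}_{F/B})=\{\kappa\in F:\mathrm{Tr}_{F/B}(\kappa)=0\}$. Suppose $f(\alpha^* )$, $f(\overline{\alpha})$, $f(\alpha')$ are three erased symbols, with $\alpha^*,\overline{\alpha},\alpha'$ distinct, such that $$\left\{\frac{\overline{\alpha}-\alpha^*}{\overline{\alpha}-\alpha'},\ \frac{\alpha'-\overline{\alpha}}{\alpha'-\alpha^*},\ \frac{\alpha^*-\alpha'}{\alpha^*-\overline{\alpha}}\right\}\cap K\neq\varnothing.$$ Then there exists a centralized repair scheme that recovers the three erased symbols by downloading three sub-symbols (elements of $B$) from each of the $n-3$ surviving nodes, each computed from that node's stored symbol; i.e., the repair bandwidth is $3(n-3)$ sub-symbols.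
   Context: Elements of $F$ are called symbols and elements of $B$ sub-symbols. The trace is $\mathrm{Tr}_{F/B}(x)=\sum_{i=0}^{t-1}x^{|B|^i}$. In centralized repair, a single repair center downloads data from the surviving nodes and computes all erased symbols; the repair bandwidth is the total number of sub-symbols downloaded. *)

theory Defs
  imports "HOL-Computational_Algebra.Polynomial"
begin

text \<open>The field F is modelled by a finite field type 'a with CARD('a) = p^(m*t).
  The subfield B = GF(p^m) of F is the unique subfield of order p^m, namely the
  set of fixed points of x \<mapsto> x^(p^m).\<close>

definition subfield_B :: "nat \<Rightarrow> nat \<Rightarrow> 'a::field set" where
  "subfield_B p m = {x. x ^ (p ^ m) = x}"

definition trace_FB :: "nat \<Rightarrow> nat \<Rightarrow> 'a::field \<Rightarrow> 'a" where
  "trace_FB q t x = (\<Sum>i<t. x ^ (q ^ i))"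

definition RS_code :: "nat \<Rightarrow> ('a::{field,finite} \<Rightarrow> 'a) set" where
  "RS_code k = {c. \<exists>f :: 'a poly. degree f \<le> k - 1 \<and> c = poly f}"

text \<open>Centralized repair scheme for the erased node set E in which the repair center
  downloads l sub-symbols (elements of Bs) from every surviving node alpha \<notin> E, the j-th
  being g alpha j (c alpha), computed from that node's stored symbol only; a recovery map R
  computes all erased symbols from the downloaded data.\<close>
definition has_centralized_repair ::
  "('a::zero \<Rightarrow> 'a) set \<Rightarrow> 'a set \<Rightarrow> 'a set \<Rightarrow> nat \<Rightarrow> bool" where
  "has_centralized_repair C Bs E l \<longleftrightarrow>
     (\<exists>g :: 'a \<Rightarrow> nat \<Rightarrow> 'a \<Rightarrow> 'a.
        (\<forall>\<alpha> j x. \<alpha> \<notin> E \<longrightarrow> j < l \<longrightarrow> g \<alpha> j x \<in> Bs) \<and>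
        (\<exists>R :: ('a \<Rightarrow> nat \<Rightarrow> 'a) \<Rightarrow> 'a \<Rightarrow> 'a.
           \<forall>c\<in>C. \<forall>e\<in>E.
             R (\<lambda>\<alpha> j. if \<alpha> \<notin> E \<and> j < l then g \<alpha> j (c \<alpha>) else 0) e = c e))"

definition repair_bandwidth :: "'a::finite set \<Rightarrow> nat \<Rightarrow> nat" where
  "repair_bandwidth E l = l * (card (UNIV :: 'a set) - card E)"

end

theory Submission imports Defs "HOL-Number_Theory.Residues" "HOL-Computational_Algebra.Primes"
begin

hide_const (open) up_ring.coeff up_ring.monom module.smult

lemma pow_card_same:
  fixes x :: "'a :: {field,finite}"
  shows   "x ^ card (UNIV :: 'a set) = x"
proof (cases "x = 0")
  case False
  have "x * (\<Prod>y\<in>UNIV-{0}. x * y) = x * x ^ (card (UNIV :: 'a set) - 1) * \<Prod>(UNIV-{0})"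
    by (simp add: prod.distrib mult_ac)
  also have "x * x ^ (card (UNIV :: 'a set) - 1) = x ^ Suc (card (UNIV :: 'a set) - 1)"
    by (subst power_Suc) auto
  also have "Suc (card (UNIV :: 'a set) - 1) = card (UNIV :: 'a set)"
    using finite_UNIV_card_ge_0[where ?'a = 'a] by simp
  also have "(\<Prod>y\<in>UNIV-{0}. x * y) = (\<Prod>y\<in>UNIV-{0}. y)"
    by (rule prod.reindex_bij_witness[of _ "\<lambda>y. y / x" "\<lambda>y. x * y"]) (use False in auto)
  finally show ?thesis
    by simp
qed (use finite_UNIV_card_ge_0[where ?'a = 'a] in auto)

context
  fixes q m t :: nat
  assumes cp: "prime CHAR('a::{field,finite})"
  and qdef: "q = CHAR('a)^m" and m1: "m \<ge> 1" and t1: "t \<ge> 1"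
  and cardq: "card (UNIV::'a set) = q^t" and tzero: "of_nat t = (0::'a)"
begin

lemma q2: "q \<ge> 2"
proof -
  have "CHAR('a) \<ge> 2" using cp prime_ge_2_nat by blast
  hence "CHAR('a)^1 \<le> CHAR('a)^m" using m1 by (intro power_increasing) auto
  thus ?thesis using \<open>CHAR('a) \<ge> 2\<close> qdef by simp
qed

lemma frob_add: "((x::'a) + y)^(q^i) = x^(q^i) + y^(q^i)"
  by (rule freshmans_dream'[OF cp, where n="m*i"]) (simp add: qdef power_mult)

lemma frob_neg: "(-(x::'a))^(q^i) = -(x^(q^i))"
proof -
  have "0 = (x + -x)^(q^i)" using q2 by simp
  also have "\<dots> = x^(q^i) + (-x)^(q^i)" by (rule frob_add)
  finally show ?thesis by (simp add: eq_neg_iff_add_eq_0 add.commute)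
qed

lemma tr_add: "trace_FB q t ((x::'a) + y) = trace_FB q t x + trace_FB q t y"
  unfolding trace_FB_def by (simp add: frob_add sum.distrib)

lemma tr_neg: "trace_FB q t (-(x::'a)) = - trace_FB q t x"
  unfolding trace_FB_def by (simp add: frob_neg sum_negf)

lemma tr_diff: "trace_FB q t ((x::'a) - y) = trace_FB q t x - trace_FB q t y"
  using tr_add[of x "-y"] tr_neg[of y] by simp

lemma tr_zero: "trace_FB q t (0::'a) = 0"
  unfolding trace_FB_def by (intro sum.neutral) (use q2 in auto)

lemma tr_one: "trace_FB q t (1::'a) = 0"
  unfolding trace_FB_def using tzero by simp

lemma pow_qt: "(x::'a)^(q^t) = x"
  using pow_card_same[of x] cardq by simp

lemma tr_B: "(trace_FB q t (x::'a))^q = trace_FB q t x"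
proof -
  have "(trace_FB q t x)^(q^1) = (\<Sum>i<t. (x^(q^i))^(q^1))"
    unfolding trace_FB_def
    by (rule freshmans_dream_sum'[OF cp, where n=m]) (simp add: qdef)
  also have "\<dots> = (\<Sum>i<t. x^(q^(Suc i)))"
    by (simp add: power_mult[symmetric] mult.commute)
  also have "\<dots> = (\<Sum>i<t. x^(q^i))"
  proof -
    have "(\<Sum>i<Suc t. x^(q^i)) = x^(q^0) + (\<Sum>i<t. x^(q^(Suc i)))"
      by (rule sum.lessThan_Suc_shift)
    moreover have "(\<Sum>i<Suc t. x^(q^i)) = (\<Sum>i<t. x^(q^i)) + x^(q^t)"
      by simp
    ultimately show ?thesis using pow_qt[of x] by (simp add: add.commute)
  qed
  finally show ?thesis unfolding trace_FB_def by simp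
qed

lemma B_pow: "(b::'a)^q = b \<Longrightarrow> b^(q^i) = b"
proof (induction i)
  case (Suc i)
  then show ?case by (simp add: power_mult mult.commute)
qed simp

lemma tr_lin: "(b::'a)^q = b \<Longrightarrow> trace_FB q t (b * x) = b * trace_FB q t x"
  unfolding trace_FB_def by (simp add: power_mult_distrib B_pow sum_distrib_left)

lemma tr_nonzero: "\<exists>x::'a. trace_FB q t x \<noteq> 0"
proof (rule ccontr)
  assume H: "\<not> ?thesis"
  define T :: "'a poly" where "T = (\<Sum>i<t. monom 1 (q^i))"
  have polyT: "poly T x = trace_FB q t x" for x
    unfolding T_def trace_FB_def by (simp add: poly_sum poly_monom)
  have le: "q^i \<le> q^(t-1)" if "i < t" for i
    using that q2 by (intro power_increasing) auto
  have degT: "degree T \<le> q^(t-1)"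
    unfolding T_def
  proof (intro degree_sum_le)
    fix i assume "i \<in> {..<t}"
    then show "degree (monom (1::'a) (q^i)) \<le> q^(t-1)"
      using degree_monom_le[of "1::'a" "q^i"] le[of i] by simp
  qed simp
  have lt: "q^(t-1) < q^t" using q2 t1 by (intro power_strict_increasing) auto
  have "coeff T (q^(t-1)) = (\<Sum>i<t. if i = t - 1 then 1 else 0)"
    unfolding T_def coeff_sum coeff_monom
    using q2 by (intro sum.cong) (auto simp: power_inject_exp)
  also have "\<dots> = 1" using t1 by simp
  finally have "T \<noteq> 0" by auto
  moreover have "T = 0"
  proof -
    have dl: "degree T < card (UNIV::'a set)" using degT lt cardq by linarith
    show ?thesis by (rule poly_eqI_degree[of UNIV]) (use H polyT dl q2 in auto)
  qed
  ultimately show False by simp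
qed

lemma tr_nondeg: "(\<And>u. trace_FB q t (u * (z::'a)) = 0) \<Longrightarrow> z = 0"
proof (rule ccontr)
  assume H: "\<And>u. trace_FB q t (u * z) = 0" and z: "z \<noteq> 0"
  obtain x :: 'a where "trace_FB q t x \<noteq> 0" using tr_nonzero by blast
  moreover have "trace_FB q t ((x / z) * z) = 0" by (rule H)
  ultimately show False using z by simp
qed

lemma card_ge: "card (UNIV::'a set) \<ge> q^(t-1) + 1"
proof -
  have "q^t = q * q^(t-1)" using t1 by (cases t) auto
  moreover have "q^(t-1) \<ge> 1" using q2 by simp
  moreover have "q * q^(t-1) \<ge> 2 * q^(t-1)" using q2 by (intro mult_right_mono) auto
  ultimately show ?thesis using cardq by linarith
qed

lemma sum_pow: "j \<le> card (UNIV::'a set) - 2 \<Longrightarrow> (\<Sum>a\<in>UNIV. (a::'a)^j) = 0"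
proof (cases "j = 0")
  case True
  have "of_nat (card (UNIV::'a set)) = (0::'a)"
    using cardq qdef m1 t1 by (simp add: power_mult[symmetric] of_nat_eq_0_iff_char_dvd)
  then show ?thesis using True by simp
next
  case False
  assume j: "j \<le> card (UNIV::'a set) - 2"
  have "\<exists>g::'a. g \<noteq> 0 \<and> g^j \<noteq> 1"
  proof (rule ccontr)
    assume H: "\<not> ?thesis"
    have "monom (1::'a) j = 1"
    proof (rule poly_eqI_degree[of "UNIV - {0}"])
      show "\<And>x. x \<in> UNIV - {0} \<Longrightarrow> poly (monom (1::'a) j) x = poly 1 x"
        using H by (auto simp: poly_monom)
      have "card (UNIV - {0::'a}) = card (UNIV::'a set) - 1"
        by (simp add: card_Diff_singleton)
      moreover have "card (UNIV::'a set) \<ge> 2" using card_ge q2 one_le_power[of q "t-1"] by linarith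
      ultimately show "degree (monom (1::'a) j) < card (UNIV - {0::'a})"
        "degree (1::'a poly) < card (UNIV - {0::'a})"
        using j by (auto simp: degree_monom_eq)
    qed
    hence "coeff (monom (1::'a) j) j = coeff 1 j" by simp
    thus False using False by simp
  qed
  then obtain g :: 'a where g: "g \<noteq> 0" "g^j \<noteq> 1" by blast
  have "(\<Sum>a\<in>UNIV. (g*a)^j) = (\<Sum>a\<in>UNIV. (a::'a)^j)"
    by (rule sum.reindex_bij_witness[of _ "\<lambda>y. y / g" "\<lambda>y. g * y"]) (use g in auto)
  hence "g^j * (\<Sum>a\<in>UNIV. (a::'a)^j) = (\<Sum>a\<in>UNIV. a^j)"
    by (simp add: power_mult_distrib sum_distrib_left)
  hence "(g^j - 1) * (\<Sum>a\<in>UNIV. (a::'a)^j) = 0" by (simp add: algebra_simps)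
  thus ?thesis using g by simp
qed

lemma sum_poly: "degree P \<le> card (UNIV::'a set) - 2 \<Longrightarrow> (\<Sum>a\<in>UNIV. poly P (a::'a)) = 0"
proof -
  assume d: "degree P \<le> card (UNIV::'a set) - 2"
  have "(\<Sum>a\<in>UNIV. poly P (a::'a)) = (\<Sum>a\<in>UNIV. \<Sum>i\<le>degree P. coeff P i * a^i)"
    by (simp add: poly_altdef)
  also have "\<dots> = (\<Sum>i\<le>degree P. coeff P i * (\<Sum>a\<in>UNIV. a^i))"
    by (subst sum.swap) (simp add: sum_distrib_left)
  also have "\<dots> = 0" using d by (intro sum.neutral) (auto simp: sum_pow)
  finally show ?thesis .
qed

definition rpoly :: "'a \<Rightarrow> 'a \<Rightarrow> 'a poly" where
  "rpoly u e = (\<Sum>i<t. smult (u^(q^i)) ([:-e,1:]^(q^i - 1)))"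

lemma rpoly_deg: "degree (rpoly u e) \<le> q^(t-1) - 1"
  unfolding rpoly_def
proof (intro degree_sum_le)
  fix i assume "i \<in> {..<t}"
  hence "q^i \<le> q^(t-1)" using q2 by (intro power_increasing) auto
  then show "degree (smult (u^(q^i)) ([:-e,1:]^(q^i - 1))) \<le> q^(t-1) - 1"
    using degree_smult_le[of "u^(q^i)" "[:-e,1:]^(q^i - 1)"] degree_linear_power[of "-e" "q^i - 1"]
    by simp
qed simp

lemma rpoly_e: "poly (rpoly u e) e = u"
proof -
  have "poly (rpoly u e) e = (\<Sum>i<t. if i = 0 then u else 0)"
    unfolding rpoly_def poly_sum
  proof (intro sum.cong refl)
    fix i assume "i \<in> {..<t}"
    have "q^i - 1 = 0 \<longleftrightarrow> i = 0" using q2 one_less_power[of q i]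
      by (cases "i = 0") auto
    then show "poly (smult (u^(q^i)) ([:-e,1:]^(q^i - 1))) e = (if i = 0 then u else 0)"
      by (auto simp: power_0_left)
  qed
  also have "\<dots> = u" using t1 by simp
  finally show ?thesis .
qed

lemma rpoly_mul: "poly (rpoly u e) a * (a - e) = trace_FB q t (u * (a - e))"
  unfolding rpoly_def poly_sum trace_FB_def sum_distrib_right
proof (intro sum.cong refl)
  fix i assume "i \<in> {..<t}"
  have "q^i \<ge> 1" using q2 by simp
  hence "(a - e)^(q^i - 1) * (a - e) = (a-e)^(q^i)"
    by (metis le_add_diff_inverse2 power_Suc2 Suc_eq_plus1 add.commute)
  then show "poly (smult (u^(q^i)) ([:-e,1:]^(q^i - 1))) a * (a - e) = (u * (a - e))^(q^i)"
    by (simp add: power_mult_distrib mult.assoc)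
qed

lemma tr_sum: "finite A \<Longrightarrow> trace_FB q t (\<Sum>x\<in>A. g x) = (\<Sum>x\<in>A. trace_FB q t (g x :: 'a))"
  by (induction A rule: finite_induct) (simp_all add: tr_zero tr_add)

lemma tr_m1: "trace_FB q t ((x::'a) - 1) = trace_FB q t x"
  by (simp add: tr_diff tr_one)

lemma tr_of_B: "(d::'a)^q = d \<Longrightarrow> trace_FB q t d = 0"
  using tr_lin[of d 1] tr_one by simp

lemma div_q: "card (UNIV::'a set) div q = q^(t-1)"
proof -
  have "q^t = q * q^(t-1)" using t1 by (cases t) auto
  thus ?thesis using cardq q2 by simp
qed

lemma dual:
  assumes df: "degree f \<le> card (UNIV::'a set) - card (UNIV::'a set) div q - 1"
  shows "(\<Sum>a\<in>UNIV. poly (rpoly u e) a * poly f (a::'a)) = 0"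
proof -
  have "degree (rpoly u e * f) \<le> (q^(t-1) - 1) + (card (UNIV::'a set) - q^(t-1) - 1)"
    using degree_mult_le[of "rpoly u e" f] rpoly_deg[of u e] df div_q by linarith
  also have "\<dots> \<le> card (UNIV::'a set) - 2" using card_ge q2 one_le_power[of q "t-1"] by linarith
  finally have "(\<Sum>a\<in>UNIV. poly (rpoly u e * f) a) = 0" by (rule sum_poly)
  thus ?thesis by simp
qed

lemma relation:
  assumes df: "degree f \<le> card (UNIV::'a set) - card (UNIV::'a set) div q - 1"
  and eE: "e \<in> E"
  and hyp: "\<And>x. x \<notin> E \<Longrightarrow> trace_FB q t (poly f x / (x - e)) = (0::'a)"
  shows "poly f e = - (\<Sum>y\<in>E-{e}. trace_FB q t (poly f y / (y - e)) * (y - e))"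
proof -
  define D where "D y = trace_FB q t (poly f y / (y - e))" for y
  have DB: "(D y)^q = D y" for y unfolding D_def by (rule tr_B)
  define z where "z = poly f e + (\<Sum>y\<in>E-{e}. D y * (y - e))"
  have "z = 0"
  proof (rule tr_nondeg)
    fix u :: 'a
    have eq1: "trace_FB q t (poly (rpoly u e) a * poly f a) = trace_FB q t (u * (a - e)) * D a"
      if "a \<noteq> e" for a
    proof -
      have "poly (rpoly u e) a * poly f a = (poly (rpoly u e) a * (a - e)) * (poly f a / (a - e))"
        using that by (simp add: field_simps)
      also have "\<dots> = trace_FB q t (u * (a - e)) * (poly f a / (a - e))" by (simp add: rpoly_mul)
      finally have eq: "poly (rpoly u e) a * poly f a = trace_FB q t (u * (a - e)) * (poly f a / (a - e))" .
      show ?thesis unfolding D_def eq by (rule tr_lin[OF tr_B])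
    qed
    have "0 = trace_FB q t (\<Sum>a\<in>UNIV. poly (rpoly u e) a * poly f a)"
      using dual[OF df] tr_zero by simp
    also have "\<dots> = (\<Sum>a\<in>UNIV. trace_FB q t (poly (rpoly u e) a * poly f a))"
      by (simp add: tr_sum)
    also have "\<dots> = trace_FB q t (u * poly f e) + (\<Sum>a\<in>UNIV-{e}. trace_FB q t (poly (rpoly u e) a * poly f a))"
      by (simp add: sum.remove[of UNIV e] rpoly_e)
    also have "(\<Sum>a\<in>UNIV-{e}. trace_FB q t (poly (rpoly u e) a * poly f a)) = (\<Sum>a\<in>UNIV-{e}. trace_FB q t (u * (a - e)) * D a)"
      by (intro sum.cong) (auto simp: eq1)
    also have "\<dots> = (\<Sum>a\<in>E-{e}. trace_FB q t (u * (a - e)) * D a)"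
    proof (rule sum.mono_neutral_right)
      show "\<forall>i\<in>UNIV - {e} - (E - {e}). trace_FB q t (u * (i - e)) * D i = 0"
      proof
        fix i assume "i \<in> UNIV - {e} - (E - {e})"
        then have "i \<notin> E" by auto
        then show "trace_FB q t (u * (i - e)) * D i = 0" using hyp[of i] by (simp add: D_def)
      qed
    qed auto
    also have "\<dots> = (\<Sum>a\<in>E-{e}. trace_FB q t (u * (D a * (a - e))))"
    proof (intro sum.cong refl)
      fix x
      have eq: "u * (D x * (x - e)) = D x * (u * (x - e))" by (simp add: mult_ac)
      show "trace_FB q t (u * (x - e)) * D x = trace_FB q t (u * (D x * (x - e)))"
        unfolding eq tr_lin[OF DB] by (rule mult.commute)
    qed
    finally show "trace_FB q t (u * z) = 0"
      unfolding z_def by (simp add: distrib_left sum_distrib_left tr_add tr_sum)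
  qed
  then show ?thesis unfolding z_def D_def by (simp add: eq_neg_iff_add_eq_0)
qed

lemma G:
  assumes hx: "hx = -(d1 * (y - x) + d2 * (z - x))"
  and d1: "d1^q = d1" and d2: "d2^q = (d2::'a)" and xy: "x \<noteq> y"
  shows "trace_FB q t (hx / (x - y)) = -(d2 * trace_FB q t ((z - x) / (x - y)))"
proof -
  have "hx / (x - y) = d1 - d2 * ((z - x) / (x - y))"
    using xy unfolding hx by (simp add: field_simps)
  then show ?thesis by (simp only: tr_diff tr_of_B[OF d1] tr_lin[OF d2]) simp
qed

lemma cycle:
  fixes X Y Z s1 s2 s3 :: 'a
  assumes "X = -(Y*s1)" "Y = -(Z*s2)" "Z = -(X*s3)" "s1 = 0 \<or> s2 = 0 \<or> s3 = 0"
  shows "X = 0 \<and> Y = 0 \<and> Z = 0"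
  using assms by auto

lemma key:
  assumes df: "degree f \<le> card (UNIV::'a set) - card (UNIV::'a set) div q - 1"
  and dist: "a \<noteq> b" "b \<noteq> c" "a \<noteq> (c::'a)"
  and cond: "trace_FB q t ((b-a)/(b-c)) = 0 \<or> trace_FB q t ((c-b)/(c-a)) = 0 \<or> trace_FB q t ((a-c)/(a-b)) = 0"
  and hyp: "\<And>x e. x \<notin> {a,b,c} \<Longrightarrow> e \<in> {a,b,c} \<Longrightarrow> trace_FB q t (poly f x / (x - e)) = 0"
  shows "poly f a = 0 \<and> poly f b = 0 \<and> poly f c = 0"
proof -
  define D where "D x y = trace_FB q t (poly f x / (x - y))" for x y
  have DB: "(D x y)^q = D x y" for x y unfolding D_def by (rule tr_B)
  have hA: "poly f a = -(D b a * (b - a) + D c a * (c - a))"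
  proof -
    have "poly f a = - (\<Sum>y\<in>{a,b,c}-{a}. D y a * (y - a))"
      unfolding D_def by (rule relation[OF df]) (auto intro: hyp)
    moreover have "{a,b,c}-{a} = {b,c}" using dist by auto
    ultimately show ?thesis using dist by simp
  qed
  have hB: "poly f b = -(D a b * (a - b) + D c b * (c - b))"
  proof -
    have "poly f b = - (\<Sum>y\<in>{a,b,c}-{b}. D y b * (y - b))"
      unfolding D_def by (rule relation[OF df]) (auto intro: hyp)
    moreover have "{a,b,c}-{b} = {a,c}" using dist by auto
    ultimately show ?thesis using dist by simp
  qed
  have hC: "poly f c = -(D a c * (a - c) + D b c * (b - c))"
  proof -
    have "poly f c = - (\<Sum>y\<in>{a,b,c}-{c}. D y c * (y - c))"
      unfolding D_def by (rule relation[OF df]) (auto intro: hyp)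
    moreover have "{a,b,c}-{c} = {a,b}" using dist by auto
    ultimately show ?thesis using dist by simp
  qed
  have hA': "poly f a = -(D c a * (c - a) + D b a * (b - a))" using hA by (simp add: algebra_simps)
  have hB': "poly f b = -(D c b * (c - b) + D a b * (a - b))" using hB by (simp add: algebra_simps)
  have hC': "poly f c = -(D b c * (b - c) + D a c * (a - c))" using hC by (simp add: algebra_simps)
  have r1: "D a b = -(D c a * trace_FB q t ((c-a)/(a-b)))"
    unfolding D_def[of a b] by (rule G[OF hA DB DB]) (use dist in auto)
  have r2: "D c a = -(D b c * trace_FB q t ((b-c)/(c-a)))"
    unfolding D_def[of c a] by (rule G[OF hC DB DB]) (use dist in auto)
  have r3: "D b c = -(D a b * trace_FB q t ((a-b)/(b-c)))"
    unfolding D_def[of b c] by (rule G[OF hB' DB DB]) (use dist in auto)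
  have r4: "D a c = -(D b a * trace_FB q t ((b-a)/(a-c)))"
    unfolding D_def[of a c] by (rule G[OF hA' DB DB]) (use dist in auto)
  have r5: "D b a = -(D c b * trace_FB q t ((c-b)/(b-a)))"
    unfolding D_def[of b a] by (rule G[OF hB DB DB]) (use dist in auto)
  have r6: "D c b = -(D a c * trace_FB q t ((a-c)/(c-b)))"
    unfolding D_def[of c b] by (rule G[OF hC' DB DB]) (use dist in auto)
  have s: "(trace_FB q t ((c-a)/(a-b)) = 0 \<or> trace_FB q t ((b-c)/(c-a)) = 0 \<or> trace_FB q t ((a-b)/(b-c)) = 0)
    \<and> (trace_FB q t ((b-a)/(a-c)) = 0 \<or> trace_FB q t ((c-b)/(b-a)) = 0 \<or> trace_FB q t ((a-c)/(c-b)) = 0)"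
  proof -
    have e1: "(a-b)/(b-c) = -((b-a)/(b-c))" "(a-c)/(c-b) = (b-a)/(b-c) - 1"
      using dist by (simp_all add: field_simps)
    have e2: "(b-c)/(c-a) = -((c-b)/(c-a))" "(b-a)/(a-c) = (c-b)/(c-a) - 1"
      using dist by (simp_all add: field_simps)
    have e3: "(c-a)/(a-b) = -((a-c)/(a-b))" "(c-b)/(b-a) = (a-c)/(a-b) - 1"
      using dist by (simp_all add: field_simps)
    show ?thesis using cond unfolding e1 e2 e3 by (auto simp: tr_neg tr_m1)
  qed
  have "D a b = 0 \<and> D c a = 0 \<and> D b c = 0" using s by (intro cycle[OF r1 r2 r3]) auto
  moreover have "D a c = 0 \<and> D b a = 0 \<and> D c b = 0" using s by (intro cycle[OF r4 r5 r6]) auto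
  ultimately show ?thesis using hA hB hC by simp
qed

end
theorem theorem4:
  fixes p m t :: nat
    and a_star a_bar a' :: "'a::{field,finite}"
  assumes "prime p" and "m \<ge> 1" and "t \<ge> 1"
    and "card (UNIV :: 'a set) = p ^ (m * t)"
    and "p dvd t"
    and "a_star \<noteq> a_bar" and "a_bar \<noteq> a'" and "a_star \<noteq> a'"
    and "{(a_bar - a_star) / (a_bar - a'), (a' - a_bar) / (a' - a_star),
          (a_star - a') / (a_star - a_bar)}
         \<inter> {\<kappa>. trace_FB (p ^ m) t \<kappa> = 0} \<noteq> {}"
  shows "has_centralized_repair
           (RS_code (card (UNIV :: 'a set) - card (UNIV :: 'a set) div (p ^ m)))
           (subfield_B p m) {a_star, a_bar, a'} 3
         \<and> repair_bandwidth ({a_star, a_bar, a'} :: 'a set) 3 = 3 * (card (UNIV :: 'a set) - 3)"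
proof -
  note A = assms
  have cpos: "CHAR('a) > 0" by (rule finite_imp_CHAR_pos) simp
  have cp: "prime CHAR('a)" by (rule prime_CHAR_semidom[OF cpos])
  have "CHAR('a) dvd p ^ (m * t)" using CHAR_dvd_CARD[where 'a='a] A(4) by simp
  hence "CHAR('a) dvd p" using cp prime_dvd_power by blast
  hence cP: "CHAR('a) = p" using cp A(1) primes_dvd_imp_eq by blast
  have tz: "of_nat t = (0::'a)" using A(5) cP by (simp add: of_nat_eq_0_iff_char_dvd)
  define q where "q = p ^ m"
  have cq: "card (UNIV :: 'a set) = q ^ t" using A(4) by (simp add: q_def power_mult)
  have qd: "q = CHAR('a)^m" using cP q_def by simp
  note K = key[OF cp qd A(2) A(3) cq tz]
  note TB = tr_B[OF cp qd A(2) A(3) cq tz]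
  note TD = tr_diff[OF cp qd A(2) A(3) cq tz]
  define E where "E = {a_star, a_bar, a'}"
  define ev where "ev j = (if j = (0::nat) then a_star else if j = 1 then a_bar else a')" for j
  define g where "g \<alpha> j x = trace_FB q t (x / (\<alpha> - ev j))" for \<alpha> j x
  define C where "C = (RS_code (card (UNIV :: 'a set) - card (UNIV :: 'a set) div (p ^ m)) :: ('a \<Rightarrow> 'a) set)"
  define dat where "dat c = (\<lambda>\<alpha> j. if \<alpha> \<notin> E \<and> j < 3 then g \<alpha> j (c \<alpha>) else 0)" for c :: "'a \<Rightarrow> 'a"
  define R where "R d e = (SOME c. c \<in> C \<and> dat c = d) e" for d e
  have cond: "trace_FB q t ((a_bar-a_star)/(a_bar-a')) = 0 \<or> trace_FB q t ((a'-a_bar)/(a'-a_star)) = 0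
     \<or> trace_FB q t ((a_star-a')/(a_star-a_bar)) = 0"
    using A(9) unfolding q_def by blast
  have gB: "g \<alpha> j x \<in> subfield_B p m" for \<alpha> j x
    unfolding g_def subfield_B_def using TB q_def by simp
  have rec: "R (dat c) e = c e" if c: "c \<in> C" and e: "e \<in> E" for c e
  proof -
    define c' where "c' = (SOME c'. c' \<in> C \<and> dat c' = dat c)"
    have "c' \<in> C \<and> dat c' = dat c" unfolding c'_def by (rule someI[of _ c]) (use c in simp)
    hence c'C: "c' \<in> C" and dc: "dat c' = dat c" by auto
    obtain f where f: "degree f \<le> card (UNIV :: 'a set) - card (UNIV :: 'a set) div q - 1" "c = poly f"
      using c unfolding C_def RS_code_def q_def by auto
    obtain f' where f': "degree f' \<le> card (UNIV :: 'a set) - card (UNIV :: 'a set) div q - 1" "c' = poly f'"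
      using c'C unfolding C_def RS_code_def q_def by auto
    have dh: "degree (f - f') \<le> card (UNIV :: 'a set) - card (UNIV :: 'a set) div q - 1"
      using degree_diff_le[OF f(1) f'(1)] .
    have hyp: "trace_FB q t (poly (f - f') x / (x - e')) = 0"
      if x: "x \<notin> {a_star, a_bar, a'}" and e': "e' \<in> {a_star, a_bar, a'}" for x e'
    proof -
      have "\<exists>j. j < 3 \<and> ev j = e'"
      proof -
        have "e' = a_star \<or> e' = a_bar \<or> e' = a'" using e' by auto
        moreover have "ev 0 = a_star" "ev 1 = a_bar" "ev 2 = a'" unfolding ev_def by auto
        moreover have "(0::nat) < 3" "(1::nat) < 3" "(2::nat) < 3" by auto
        ultimately show ?thesis by blast
      qed
      then obtain j where j: "j < 3" "ev j = e'" by blast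
      have "dat c' x j = dat c x j" using dc by simp
      hence "g x j (c' x) = g x j (c x)" using x j unfolding dat_def E_def by simp
      hence "trace_FB q t (poly f x / (x - e')) - trace_FB q t (poly f' x / (x - e')) = 0"
        unfolding g_def f f' j(2) by simp
      thus ?thesis by (simp add: diff_divide_distrib TD)
    qed
    have "poly (f - f') a_star = 0 \<and> poly (f - f') a_bar = 0 \<and> poly (f - f') a' = 0"
      by (rule K[OF dh A(6) A(7) A(8) cond hyp])
    hence "c' e = c e" using e unfolding E_def f f' by auto
    thus ?thesis unfolding R_def c'_def by simp
  qed
  have "has_centralized_repair C (subfield_B p m) E 3"
    unfolding has_centralized_repair_def
  proof (intro exI[of _ g] conjI allI impI exI[of _ R] ballI)
    fix c e assume "c \<in> C" "e \<in> E"
    show "R (\<lambda>\<alpha> j. if \<alpha> \<notin> E \<and> j < 3 then g \<alpha> j (c \<alpha>) else 0) e = c e"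
      using rec[OF \<open>c \<in> C\<close> \<open>e \<in> E\<close>] unfolding dat_def .
  qed (simp add: gB)
  moreover have "card E = 3" unfolding E_def using A(6-8) by auto
  ultimately show ?thesis unfolding C_def E_def repair_bandwidth_def by simp
qed

end
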